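(* Let $M$ be a finite monoid. Every filtered left $M$-set is isomorphic (as a left $M$-set) to $M/K$ for a suitable saturated $F$-submonoid $K$ of $M$.
   Context: A left $M$-set $A$ is filtered if (F1) $A\neq\emptyset$; (F2) if $m_1a=m_2a$ ($m_i\in M,a\in A$) then there are $m\in M,\tilde a\in A$ with $m\tilde a=a$, $m_1m=m_2m$; (F3) for $a_1,a_2\in A$ there are $m_1,m_2\in M$, $a\in A$ with $m_ia=a_i$. A monoid $K$ is an $F$-monoid if for any $m,n\in K$ there exists $x\in K$ with $mx=nx$; an $F$-submonoid is a submonoid that is an $F$-monoid. A submonoid $K\subseteq M$ is saturated if whenever $m\in M$ and $mx=x$ for some $x\in K$, then $m\in K$. For an $F$-submonoid $K$, $M/K$ is the quotient of $M$ by the equivalence relation $m\sim_K n\iff \exists x\in K: mx=nx$, with left $M$-action induced by left multiplication. *)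

theory Defs
  imports Main
begin

definition left_Mset :: "'a set \<Rightarrow> ('m::monoid_mult \<Rightarrow> 'a \<Rightarrow> 'a) \<Rightarrow> bool" where
  "left_Mset A act \<longleftrightarrow>
     (\<forall>m a. a \<in> A \<longrightarrow> act m a \<in> A) \<and>
     (\<forall>a\<in>A. act 1 a = a) \<and>
     (\<forall>m n a. a \<in> A \<longrightarrow> act (m * n) a = act m (act n a))"

definition filtered_Mset :: "'a set \<Rightarrow> ('m::monoid_mult \<Rightarrow> 'a \<Rightarrow> 'a) \<Rightarrow> bool" where
  "filtered_Mset A act \<longleftrightarrow> left_Mset A act \<and>
     A \<noteq> {} \<and>
     (\<forall>m1 m2 a. a \<in> A \<and> act m1 a = act m2 a \<longrightarrow>
        (\<exists>m. \<exists>a'\<in>A. act m a' = a \<and> m1 * m = m2 * m)) \<and>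
     (\<forall>a1\<in>A. \<forall>a2\<in>A. \<exists>m1 m2. \<exists>a\<in>A. act m1 a = a1 \<and> act m2 a = a2)"

definition submonoid :: "'m::monoid_mult set \<Rightarrow> bool" where
  "submonoid K \<longleftrightarrow> 1 \<in> K \<and> (\<forall>x\<in>K. \<forall>y\<in>K. x * y \<in> K)"

definition F_submonoid :: "'m::monoid_mult set \<Rightarrow> bool" where
  "F_submonoid K \<longleftrightarrow> submonoid K \<and> (\<forall>m\<in>K. \<forall>n\<in>K. \<exists>x\<in>K. m * x = n * x)"

definition saturated :: "'m::monoid_mult set \<Rightarrow> bool" where
  "saturated K \<longleftrightarrow> submonoid K \<and> (\<forall>m x. x \<in> K \<and> m * x = x \<longrightarrow> m \<in> K)"

definition simK :: "'m::monoid_mult set \<Rightarrow> 'm \<Rightarrow> 'm \<Rightarrow> bool" where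
  "simK K m n \<longleftrightarrow> (\<exists>x\<in>K. m * x = n * x)"

definition simK_rel :: "'m::monoid_mult set \<Rightarrow> ('m \<times> 'm) set" where
  "simK_rel K = {(m, n). simK K m n}"

definition quot :: "'m::monoid_mult set \<Rightarrow> 'm set set" where
  "quot K = UNIV // simK_rel K"

definition cls :: "'m::monoid_mult set \<Rightarrow> 'm \<Rightarrow> 'm set" where
  "cls K m = simK_rel K `` {m}"

definition quot_act :: "'m::monoid_mult set \<Rightarrow> 'm \<Rightarrow> 'm set \<Rightarrow> 'm set" where
  "quot_act K m C = cls K (m * (SOME c. c \<in> C))"

definition Mset_iso :: "'a set \<Rightarrow> ('m \<Rightarrow> 'a \<Rightarrow> 'a) \<Rightarrow> 'b set \<Rightarrow> ('m \<Rightarrow> 'b \<Rightarrow> 'b) \<Rightarrow> bool" where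
  "Mset_iso A act B act' \<longleftrightarrow>
     (\<exists>f. bij_betw f A B \<and> (\<forall>m. \<forall>a\<in>A. f (act m a) = act' m (f a)))"

end

theory Submission
  imports Defs
begin

lemma exists_generator:
  fixes A :: "'a set" and act :: "'m::{monoid_mult, finite} \<Rightarrow> 'a \<Rightarrow> 'a"
  assumes F: "filtered_Mset A act"
  shows "\<exists>a\<in>A. \<forall>b\<in>A. \<exists>m. act m a = b"
proof -
  have L: "left_Mset A act" and ne: "A \<noteq> {}"
    and F3: "\<forall>a1\<in>A. \<forall>a2\<in>A. \<exists>m1 m2. \<exists>a\<in>A. act m1 a = a1 \<and> act m2 a = a2"
    using F unfolding filtered_Mset_def by auto
  have mul: "\<And>m n x. x \<in> A \<Longrightarrow> act (m * n) x = act m (act n x)"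
    using L unfolding left_Mset_def by auto
  define Orb where "Orb x = range (\<lambda>m. act m x)" for x
  have finO: "finite (Orb x)" for x unfolding Orb_def by simp
  define S where "S = (\<lambda>x. card (Orb x)) ` A"
  have Sfin: "finite S"
  proof (rule finite_subset)
    show "S \<subseteq> {..card (UNIV::'m set)}" unfolding S_def Orb_def
      using card_image_le[of "UNIV::'m set"] by (auto simp del: card_image_le)
  qed simp
  have "S \<noteq> {}" using ne unfolding S_def by auto
  then have "Max S \<in> S" using Sfin by simp
  then obtain a where aA: "a \<in> A" and ca: "card (Orb a) = Max S" unfolding S_def by auto
  have "\<forall>b\<in>A. \<exists>m. act m a = b"
  proof
    fix b assume bA: "b \<in> A"
    obtain m1 m2 c where cA: "c \<in> A" and c1: "act m1 c = a" and c2: "act m2 c = b"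
      using F3 aA bA by blast
    have sub: "Orb a \<subseteq> Orb c"
    proof
      fix y assume "y \<in> Orb a"
      then obtain m where "y = act m a" unfolding Orb_def by auto
      then have "y = act (m * m1) c" using mul[OF cA] c1 by simp
      then show "y \<in> Orb c" unfolding Orb_def by auto
    qed
    have "card (Orb c) \<le> Max S" using Sfin cA unfolding S_def by auto
    then have "Orb a = Orb c" using card_subset_eq[OF finO sub] card_mono[OF finO sub] ca by simp
    moreover have "b \<in> Orb c" using c2 unfolding Orb_def by auto
    ultimately show "\<exists>m. act m a = b" unfolding Orb_def by (metis (mono_tags, lifting) imageE)
  qed
  then show ?thesis using aA by blast
qed

theorem theorem3p12:
  fixes A :: "'a set" and act :: "'m::{monoid_mult, finite} \<Rightarrow> 'a \<Rightarrow> 'a"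
  assumes "filtered_Mset A act"
  shows "\<exists>K :: 'm set. F_submonoid K \<and> saturated K \<and>
           Mset_iso A act (quot K) (quot_act K)"
proof -
  have L: "left_Mset A act"
    and F2: "\<forall>m1 m2 a. a \<in> A \<and> act m1 a = act m2 a \<longrightarrow>
        (\<exists>m. \<exists>a'\<in>A. act m a' = a \<and> m1 * m = m2 * m)"
    using assms unfolding filtered_Mset_def by auto
  have mul: "\<And>m n x. x \<in> A \<Longrightarrow> act (m * n) x = act m (act n x)"
    and one: "\<And>x. x \<in> A \<Longrightarrow> act 1 x = x"
    and cl: "\<And>m x. x \<in> A \<Longrightarrow> act m x \<in> A"
    using L unfolding left_Mset_def by auto
  obtain a where aA: "a \<in> A" and gen: "\<forall>b\<in>A. \<exists>m. act m a = b"
    using exists_generator[OF assms] by blast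
  define K where "K = {x. act x a = a}"
  have simK_iff: "simK K m n \<longleftrightarrow> act m a = act n a" for m n
  proof
    assume "simK K m n"
    then obtain x where "act x a = a" "m * x = n * x" unfolding simK_def K_def by auto
    then show "act m a = act n a" using mul[OF aA] by metis
  next
    assume "act m a = act n a"
    then obtain m' a' where a'A: "a' \<in> A" and ma: "act m' a' = a" and mm: "m * m' = n * m'"
      using F2 aA by blast
    obtain y where y: "act y a = a'" using gen a'A by blast
    have "act (m' * y) a = a" using mul[OF aA] y ma by simp
    moreover have "m * (m' * y) = n * (m' * y)" using mm by (simp add: mult.assoc[symmetric])
    ultimately show "simK K m n" unfolding simK_def K_def by blast
  qed
  have cls_eq: "cls K m = {n. act n a = act m a}" for m
    unfolding cls_def simK_rel_def using simK_iff by auto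
  have subm: "submonoid K" unfolding submonoid_def K_def using one[OF aA] mul[OF aA] by auto
  have FK: "F_submonoid K" unfolding F_submonoid_def
  proof (intro conjI subm ballI)
    fix m n assume "m \<in> K" "n \<in> K"
    then have "simK K m n" using simK_iff unfolding K_def by simp
    then show "\<exists>x\<in>K. m * x = n * x" unfolding simK_def by blast
  qed
  have SK: "saturated K" unfolding saturated_def
  proof (intro conjI subm allI impI)
    fix m x assume "x \<in> K \<and> m * x = x"
    then have "act x a = a" "m * x = x" unfolding K_def by auto
    then have "act m a = a" using mul[OF aA] by metis
    then show "m \<in> K" unfolding K_def by simp
  qed
  have quot_eq: "quot K = range (cls K)"
    unfolding quot_def quotient_def cls_def by auto
  define f where "f b = cls K (SOME m. act m a = b)" for b
  have fb: "b \<in> A \<Longrightarrow> f b = {n. act n a = b}" for b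
    unfolding f_def cls_eq using someI_ex[of "\<lambda>m. act m a = b"] gen by auto
  have iso: "Mset_iso A act (quot K) (quot_act K)"
    unfolding Mset_iso_def
  proof (intro exI conjI allI ballI)
    show "bij_betw f A (quot K)"
    proof (rule bij_betwI')
      fix x y
      assume xA: "x \<in> A" and yA: "y \<in> A"
      obtain n where n: "act n a = x" using gen xA by blast
      have "n \<in> f x" using fb[OF xA] n by simp
      then show "(f x = f y) = (x = y)" using fb[OF xA] fb[OF yA] n by auto
    next
      fix x assume "x \<in> A"
      then show "f x \<in> quot K" unfolding quot_eq using fb gen cls_eq by (metis rangeI)
    next
      fix C assume "C \<in> quot K"
      then obtain m where "C = cls K m" unfolding quot_eq by auto
      then have "C = f (act m a)" using fb cls_eq cl[OF aA] by simp
      then show "\<exists>x\<in>A. C = f x" using cl[OF aA] by blast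
    qed
  next
    fix m b assume bA: "b \<in> A"
    obtain n where n: "act n a = b" using gen bA by blast
    have "n \<in> f b" using fb[OF bA] n by simp
    then have ex: "\<exists>c. c \<in> f b" by blast
    define c where "c = (SOME c. c \<in> f b)"
    have "c \<in> f b" unfolding c_def using someI_ex[OF ex] .
    then have cb: "act c a = b" using fb[OF bA] by simp
    have "quot_act K m (f b) = cls K (m * c)" unfolding quot_act_def c_def ..
    also have "\<dots> = {n. act n a = act m b}" unfolding cls_eq using mul[OF aA] cb by simp
    also have "\<dots> = f (act m b)" using fb[OF cl[OF bA]] by simp
    finally show "f (act m b) = quot_act K m (f b)" by simp
  qed
  show ?thesis using FK SK iso by blast
qed

end
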